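(* Let $n=n_{obs}+n_{mis}$ with $n_{obs}\ge2$, $n_{mis}\ge1$. Let $Y_1,\dots,Y_{n_{obs}}$ be i.i.d. $N(\mu,\sigma^2)$, with $\bar Y_{obs}$ their mean and $CSS=\sum_{i=1}^{n_{obs}}(Y_i-\bar Y_{obs})^2$. Fix a real $\nu_{prior}$ with $n_{obs}+\nu_{prior}>3$ and set $\nu_{PD}=\nu_{prior}+n_{obs}-1$. Posterior-draw (PD) multiple imputation with $D\ge1$ imputations is defined as follows: for each $d=1,\dots,D$, independently, draw $U_{PD,d}\sim\chi^2_{\nu_{PD}}$ and $Z_{PD,d}\sim N(0,1/n_{obs})$, set $\hat\sigma^2_{d}=CSS/U_{PD,d}$, $\hat\mu_d=\bar Y_{obs}+\hat\sigma_d Z_{PD,d}$, draw $Y_{imp,i,d}=\hat\mu_d+\hat\sigma_d Z_{imp,i,d}$ for $i=n_{obs}+1,\dots,n$ with $Z_{imp,i,d}$ i.i.d. $N(0,1)$ (all random variables independent of each other and of the data), and let $\hat\sigma^2_{SI,d}$ be the sample variance (divisor $n-1$) of the $n$ values $Y_1,\dots,Y_{n_{obs}},Y_{imp,n_{obs}+1,d},\dots,Y_{imp,n,d}$. Let $\hat\sigma^2_{MI,PD}=\frac1D\sum_{d=1}^D\hat\sigma^2_{SI,d}$. Then $$E(\hat\sigma^2_{MI,PD})-\sigma^2=-\sigma^2\frac{n_{mis}(\nu_{prior}-2)}{(n-1)(n_{obs}+\nu_{prior}-3)},$$ for every $D\ge1$. *)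

theory Defs
  imports "HOL-Probability.Probability"
begin

definition chi_squared_density :: "real \<Rightarrow> real \<Rightarrow> real" where
  "chi_squared_density k x =
     (if x > 0 then x powr (k / 2 - 1) * exp (- x / 2) / (2 powr (k / 2) * Gamma (k / 2)) else 0)"

datatype rv_label = Yv nat | Uv nat | ZPDv nat | Zimpv nat nat

definition sample_mean :: "nat \<Rightarrow> (nat \<Rightarrow> real) \<Rightarrow> real" where
  "sample_mean n v = (\<Sum>i=1..n. v i) / real n"

definition sample_var :: "nat \<Rightarrow> (nat \<Rightarrow> real) \<Rightarrow> real" where
  "sample_var n v = (\<Sum>i=1..n. (v i - sample_mean n v)\<^sup>2) / (real n - 1)"

definition sigma2_MI_PD :: "nat \<Rightarrow> nat \<Rightarrow> nat \<Rightarrow> (rv_label \<Rightarrow> real) \<Rightarrow> real" where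
  "sigma2_MI_PD n_obs n_mis D x =
     (let n = n_obs + n_mis;
          Ybar = sample_mean n_obs (\<lambda>i. x (Yv i));
          CSS = (\<Sum>i=1..n_obs. (x (Yv i) - Ybar)\<^sup>2);
          sig = (\<lambda>d. sqrt (CSS / x (Uv d)));
          mu = (\<lambda>d. Ybar + sig d * x (ZPDv d));
          vals = (\<lambda>d i. if i \<le> n_obs then x (Yv i) else mu d + sig d * x (Zimpv i d))
      in (\<Sum>d=1..D. sample_var n (vals d)) / real D)"

end

theory Submission
  imports Defs
begin


lemma chi_nonneg: "k > 0 \<Longrightarrow> chi_squared_density k x \<ge> 0"
  by (auto simp: chi_squared_density_def intro!: divide_nonneg_pos mult_pos_pos Gamma_real_pos)

lemma chi_inv_nn:
  fixes k :: real assumes k: "k > 2"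
  shows "(\<integral>\<^sup>+u. ennreal (chi_squared_density k u) * ennreal (1 / \<bar>u\<bar>) \<partial>lborel) = ennreal (1 / (k - 2))"
proof -
  define a where "a = k / 2"
  have a: "a > 1" using k by (simp add: a_def)
  define C where "C = 1 / (2 powr a * Gamma a)"
  have Gpos: "Gamma a > 0" "Gamma (a - 1) > 0" using a by (auto intro!: Gamma_real_pos)
  have C: "C > 0" using Gpos by (simp add: C_def)
  define h where "h = (\<lambda>u::real. indicator {0..} u * u powr (a - 2) / exp (u / 2))"
  have h_nn: "h u \<ge> 0" for u by (simp add: h_def)
  have eq1: "ennreal (chi_squared_density k u) * ennreal (1 / \<bar>u\<bar>) = ennreal C * ennreal (h u)" for u
  proof (cases "u > 0")
    case True
    have "u powr (a - 1) = u powr ((a - 2) + 1)" by simp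
    also have "\<dots> = u powr (a - 2) * u powr 1" by (rule powr_add)
    also have "\<dots> = u powr (a - 2) * u" using True by simp
    finally have "u powr (a - 1) = u powr (a - 2) * u" .
    then have "chi_squared_density k u * (1 / \<bar>u\<bar>) = C * h u"
      using True by (simp add: chi_squared_density_def h_def C_def a_def[symmetric] exp_minus field_simps)
    moreover have "chi_squared_density k u \<ge> 0" using k by (intro chi_nonneg) auto
    ultimately show ?thesis using True C h_nn
      by (simp add: ennreal_mult[symmetric])
  next
    case False
    then have "h u = 0" by (cases "u = 0") (auto simp: h_def)
    then show ?thesis using False by (simp add: chi_squared_density_def)
  qed
  have eq2: "h (2 * x) = 2 powr (a - 2) * (indicator {0..} x * x powr ((a - 1) - 1) / exp x)" for x
  proof (cases "x \<ge> 0")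
    case True
    then show ?thesis by (simp add: h_def powr_mult indicator_def algebra_simps)
  next
    case False then show ?thesis by (simp add: h_def indicator_def)
  qed
  have hm: "(\<lambda>u. ennreal (h u)) \<in> borel_measurable borel" unfolding h_def by measurable
  have "(\<integral>\<^sup>+u. ennreal (h u) \<partial>lborel) = 2 * (\<integral>\<^sup>+x. ennreal (h (2 * x)) \<partial>lborel)"
    using nn_integral_real_affine[OF hm, of 2 0] by simp
  also have "\<dots> = 2 * (\<integral>\<^sup>+x. ennreal (2 powr (a - 2)) * ennreal (indicator {0..} x * x powr ((a - 1) - 1) / exp x) \<partial>lborel)"
    by (intro arg_cong[where f="\<lambda>x. 2 * x"] nn_integral_cong) (simp add: eq2 ennreal_mult[symmetric])
  also have "\<dots> = 2 * (ennreal (2 powr (a - 2)) * ennreal (Gamma (a - 1)))"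
    using a by (subst nn_integral_cmult) (auto simp: Gamma_conv_nn_integral_real)
  finally have I: "(\<integral>\<^sup>+u. ennreal (h u) \<partial>lborel) = 2 * (ennreal (2 powr (a - 2)) * ennreal (Gamma (a - 1)))" .
  have "(\<integral>\<^sup>+u. ennreal (chi_squared_density k u) * ennreal (1 / \<bar>u\<bar>) \<partial>lborel)
      = ennreal C * (\<integral>\<^sup>+u. ennreal (h u) \<partial>lborel)"
    by (simp add: eq1 nn_integral_cmult h_def)
  also have "\<dots> = ennreal (C * (2 * (2 powr (a - 2) * Gamma (a - 1))))"
    using C Gpos by (simp add: I ennreal_mult)
  also have "C * (2 * (2 powr (a - 2) * Gamma (a - 1))) = 1 / (k - 2)"
  proof -
    have g: "Gamma a = (a - 1) * Gamma (a - 1)"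
    proof -
      have "a - 1 \<notin> \<int>\<^sub>\<le>\<^sub>0" using a by (auto elim!: nonpos_Ints_cases)
      then show ?thesis using Gamma_plus1[of "a - 1"] by simp
    qed
    have "2 powr a = 2 powr ((a - 2) + 2)" by simp
    also have "\<dots> = 2 powr (a - 2) * 2 powr 2" by (rule powr_add)
    finally have p: "2 powr a = 2 powr (a - 2) * 4" by simp
    have kk: "k = 2 * a" by (simp add: a_def)
    have g0: "Gamma (a - 1) \<noteq> 0" using Gpos by simp
    show ?thesis using g0 a unfolding C_def g p kk by (simp add: field_simps)
  qed
  finally show ?thesis .
qed



lemma sumsq_dev:
  fixes v :: "'b \<Rightarrow> real"
  assumes "finite A" "card A > 0"
  shows "(\<Sum>i\<in>A. (v i - (\<Sum>j\<in>A. v j) / card A)\<^sup>2) = (\<Sum>i\<in>A. (v i)\<^sup>2) - (\<Sum>i\<in>A. v i)\<^sup>2 / card A"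
proof -
  define c where "c = (\<Sum>j\<in>A. v j) / card A"
  have "(\<Sum>i\<in>A. (v i - c)\<^sup>2) = (\<Sum>i\<in>A. (v i)\<^sup>2 + c\<^sup>2 - 2 * c * v i)"
    by (intro sum.cong) (auto simp: power2_diff algebra_simps)
  also have "\<dots> = (\<Sum>i\<in>A. (v i)\<^sup>2) + card A * c\<^sup>2 - 2 * c * (\<Sum>i\<in>A. v i)"
    by (simp add: sum.distrib sum_subtractf sum_distrib_left)
  also have "\<dots> = (\<Sum>i\<in>A. (v i)\<^sup>2) - (\<Sum>i\<in>A. v i)\<^sup>2 / card A"
    using assms by (simp add: c_def field_simps power2_eq_square)
  finally show ?thesis by (simp add: c_def)
qed

lemma split_sum_nat:
  fixes f :: "nat \<Rightarrow> real"
  shows "(\<Sum>i=1..no+nmi. f i) = (\<Sum>i=1..no. f i) + (\<Sum>i=no+1..no+nmi. f i)"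
proof -
  have "{1..no+nmi} = {1..no} \<union> {no+1..no+nmi}" by auto
  then show ?thesis by (simp add: sum.union_disjoint)
qed

lemma fin_id: fixes N K Sy Sy2 Sw Sw2 s z :: real assumes "N > 0" "K > 0"
  shows "(Sy2 + (K * (Sy/N + s*z)\<^sup>2 + 2 * (Sy/N + s*z) * s * Sw + s\<^sup>2 * Sw2)) - (Sy + (K * (Sy/N + s*z) + s * Sw))\<^sup>2 / (N + K)
      = (Sy2 - Sy\<^sup>2 / N) + s\<^sup>2 * (Sw2 - Sw\<^sup>2 / K + (N * K / (N + K)) * (z + Sw / K)\<^sup>2)"
proof -
  define a where "a = 1 / N"
  define b where "b = 1 / K"
  define c where "c = 1 / (N + K)"
  have h: "a * N = 1" "b * K = 1" "c * (N + K) = 1" using assms by (auto simp: a_def b_def c_def)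
  have e: "Sy / N = Sy * a" "Sy\<^sup>2 / N = Sy\<^sup>2 * a" "Sw\<^sup>2 / K = Sw\<^sup>2 * b" "Sw / K = Sw * b"
     "N * K / (N + K) = N * K * c" "\<And>x. x / (N + K) = x * c"
    by (auto simp: a_def b_def c_def)
  show ?thesis unfolding e using h by algebra
qed

lemma alg:
  fixes no nmi :: nat and y w :: "nat \<Rightarrow> real" and z s ybar :: real
  assumes "no \<ge> 1" "nmi \<ge> 1"
  assumes yb: "ybar = (\<Sum>i=1..no. y i) / no"
  shows "(\<Sum>i=1..no+nmi. ((if i \<le> no then y i else ybar + s * z + s * w i)
           - (\<Sum>j=1..no+nmi. (if j \<le> no then y j else ybar + s * z + s * w j)) / real (no + nmi))\<^sup>2)
       = ((\<Sum>i=1..no. (y i)\<^sup>2) - (\<Sum>i=1..no. y i)\<^sup>2 / no)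
         + s\<^sup>2 * ((\<Sum>i=no+1..no+nmi. (w i)\<^sup>2) - (\<Sum>i=no+1..no+nmi. w i)\<^sup>2 / nmi
             + (real no * real nmi / real (no + nmi)) * (z + (\<Sum>i=no+1..no+nmi. w i) / nmi)\<^sup>2)"
proof -
  define v where "v = (\<lambda>i. if i \<le> no then y i else ybar + s * z + s * w i)"
  define m where "m = ybar + s * z"
  define Sy where "Sy = (\<Sum>i=1..no. y i)"
  define Sy2 where "Sy2 = (\<Sum>i=1..no. (y i)\<^sup>2)"
  define Sw where "Sw = (\<Sum>i=no+1..no+nmi. w i)"
  define Sw2 where "Sw2 = (\<Sum>i=no+1..no+nmi. (w i)\<^sup>2)"
  have c: "card {1..no + nmi} = no + nmi" by simp
  have L: "(\<Sum>i=1..no+nmi. (v i - (\<Sum>j=1..no+nmi. v j) / real (no + nmi))\<^sup>2)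
      = (\<Sum>i=1..no+nmi. (v i)\<^sup>2) - (\<Sum>i=1..no+nmi. v i)\<^sup>2 / real (no + nmi)"
    using sumsq_dev[of "{1..no+nmi}" v] assms by simp
  have s1: "(\<Sum>i=1..no. v i) = Sy" unfolding Sy_def by (intro sum.cong) (auto simp: v_def)
  have s2: "(\<Sum>i=1..no. (v i)\<^sup>2) = Sy2" unfolding Sy2_def by (intro sum.cong) (auto simp: v_def)
  have s3: "(\<Sum>i=no+1..no+nmi. v i) = nmi * m + s * Sw"
  proof -
    have "(\<Sum>i=no+1..no+nmi. v i) = (\<Sum>i=no+1..no+nmi. m + s * w i)"
      by (intro sum.cong) (auto simp: v_def m_def)
    also have "\<dots> = nmi * m + s * Sw" by (simp add: sum.distrib sum_distrib_left Sw_def)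
    finally show ?thesis .
  qed
  have s4: "(\<Sum>i=no+1..no+nmi. (v i)\<^sup>2) = nmi * m\<^sup>2 + 2 * m * s * Sw + s\<^sup>2 * Sw2"
  proof -
    have "(\<Sum>i=no+1..no+nmi. (v i)\<^sup>2) = (\<Sum>i=no+1..no+nmi. m\<^sup>2 + (2 * m * s) * w i + s\<^sup>2 * (w i)\<^sup>2)"
      by (intro sum.cong) (auto simp: v_def m_def power2_eq_square algebra_simps)
    also have "\<dots> = nmi * m\<^sup>2 + 2 * m * s * Sw + s\<^sup>2 * Sw2"
      by (simp add: sum.distrib sum_distrib_left Sw_def Sw2_def)
    finally show ?thesis .
  qed
  have fin: "(Sy2 + (nmi * m\<^sup>2 + 2 * m * s * Sw + s\<^sup>2 * Sw2)) - (Sy + (nmi * m + s * Sw))\<^sup>2 / real (no + nmi)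
      = (Sy2 - Sy\<^sup>2 / no) + s\<^sup>2 * (Sw2 - Sw\<^sup>2 / nmi + (real no * real nmi / real (no + nmi)) * (z + Sw / nmi)\<^sup>2)"
    using fin_id[of "real no" "real nmi" Sy2 Sy s z Sw Sw2] assms unfolding m_def yb Sy_def[symmetric]
    by simp
  have t1: "(\<Sum>i=1..no+nmi. v i) = Sy + (nmi * m + s * Sw)"
    using split_sum_nat[of v no nmi] s1 s3 by simp
  have t2: "(\<Sum>i=1..no+nmi. (v i)\<^sup>2) = Sy2 + (nmi * m\<^sup>2 + 2 * m * s * Sw + s\<^sup>2 * Sw2)"
    using split_sum_nat[of "\<lambda>i. (v i)\<^sup>2" no nmi] s2 s4 by simp
  have "(\<Sum>i=1..no+nmi. ((if i \<le> no then y i else ybar + s * z + s * w i)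
           - (\<Sum>j=1..no+nmi. (if j \<le> no then y j else ybar + s * z + s * w j)) / real (no + nmi))\<^sup>2)
      = (\<Sum>i=1..no+nmi. (v i - (\<Sum>j=1..no+nmi. v j) / real (no + nmi))\<^sup>2)"
    by (simp only: v_def)
  also have "\<dots> = (Sy2 + (nmi * m\<^sup>2 + 2 * m * s * Sw + s\<^sup>2 * Sw2)) - (Sy + (nmi * m + s * Sw))\<^sup>2 / real (no + nmi)"
    by (subst L) (simp only: t1 t2)
  also note fin
  finally show ?thesis unfolding Sy_def Sy2_def Sw_def Sw2_def .
qed



lemma (in prob_space) normal_mom:
  assumes s: "\<sigma> > 0" and D: "distributed M lborel X (\<lambda>y. ennreal (normal_density \<mu> \<sigma> y))"
  shows "integrable M X" "expectation X = \<mu>"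
    "integrable M (\<lambda>\<omega>. (X \<omega>)\<^sup>2)" "expectation (\<lambda>\<omega>. (X \<omega>)\<^sup>2) = \<mu>\<^sup>2 + \<sigma>\<^sup>2"
proof -
  have Xm[measurable]: "X \<in> borel_measurable M"
    using distributed_measurable[OF D] by simp
  show i1: "integrable M X"
    using distributed_integrable[OF D, of "\<lambda>x. x"] integrable_normal_moment_nz_1[OF s, of \<mu>] by simp
  show e1: "expectation X = \<mu>" by (rule normal_distributed_expectation[OF s D])
  have i2: "integrable M (\<lambda>\<omega>. (X \<omega> - \<mu>)^2)"
    using distributed_integrable[OF D, of "\<lambda>x. (x - \<mu>)^2"] integrable_normal_moment[OF s, of \<mu> 2]
    by simp
  have e2: "expectation (\<lambda>\<omega>. (X \<omega> - \<mu>)^2) = \<sigma>\<^sup>2"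
    using distributed_integral[OF D, of "\<lambda>x. (x - \<mu>)^2", symmetric] integral_normal_moment_even[OF s, of \<mu> 1]
    by (simp add: power2_eq_square)
  have eq: "(\<lambda>\<omega>. (X \<omega>)\<^sup>2) = (\<lambda>\<omega>. (X \<omega> - \<mu>)^2 + (2 * \<mu> * X \<omega> - \<mu>\<^sup>2))"
    by (auto simp: power2_eq_square algebra_simps)
  show "integrable M (\<lambda>\<omega>. (X \<omega>)\<^sup>2)" unfolding eq using i1 i2 by auto
  show "expectation (\<lambda>\<omega>. (X \<omega>)\<^sup>2) = \<mu>\<^sup>2 + \<sigma>\<^sup>2" unfolding eq using i1 i2 e1 e2
    by (simp add: prob_space power2_eq_square)
qed

lemma (in prob_space) chi_inv_expect:
  assumes k: "k > 2" and D: "distributed M lborel U (\<lambda>u. ennreal (chi_squared_density k u))"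
  shows "integrable M (\<lambda>\<omega>. 1 / \<bar>U \<omega>\<bar>)" "expectation (\<lambda>\<omega>. 1 / \<bar>U \<omega>\<bar>) = 1 / (k - 2)"
proof -
  have Um[measurable]: "U \<in> borel_measurable M"
    using distributed_measurable[OF D] by simp
  have "(\<integral>\<^sup>+\<omega>. ennreal (1 / \<bar>U \<omega>\<bar>) \<partial>M) = (\<integral>\<^sup>+u. ennreal (chi_squared_density k u) * ennreal (1 / \<bar>u\<bar>) \<partial>lborel)"
    by (rule distributed_nn_integral[OF D, symmetric]) simp
  also have "\<dots> = ennreal (1 / (k - 2))" by (rule chi_inv_nn[OF k])
  finally have nn: "(\<integral>\<^sup>+\<omega>. ennreal (1 / \<bar>U \<omega>\<bar>) \<partial>M) = ennreal (1 / (k - 2))" .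
  have "has_bochner_integral M (\<lambda>\<omega>. 1 / \<bar>U \<omega>\<bar>) (1 / (k - 2))"
    by (rule has_bochner_integral_nn_integral) (use nn k in auto)
  then show "integrable M (\<lambda>\<omega>. 1 / \<bar>U \<omega>\<bar>)" "expectation (\<lambda>\<omega>. 1 / \<bar>U \<omega>\<bar>) = 1 / (k - 2)"
    by (auto simp: has_bochner_integral_iff)
qed

lemma (in prob_space) quad_form:
  fixes X :: "'i \<Rightarrow> 'a \<Rightarrow> real" and lab :: "'j \<Rightarrow> 'i"
  assumes ind: "indep_vars (\<lambda>_. borel) X I" and fin: "finite J" and sub: "lab ` J \<subseteq> I"
    and inj: "inj_on lab J"
    and int1: "\<And>j. j \<in> J \<Longrightarrow> integrable M (X (lab j))"
    and int2: "\<And>j. j \<in> J \<Longrightarrow> integrable M (\<lambda>\<omega>. (X (lab j) \<omega>)\<^sup>2)"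
  shows "integrable M (\<lambda>\<omega>. (\<Sum>j\<in>J. a j * X (lab j) \<omega>)\<^sup>2)"
    "expectation (\<lambda>\<omega>. (\<Sum>j\<in>J. a j * X (lab j) \<omega>)\<^sup>2)
       = (\<Sum>j\<in>J. a j * expectation (X (lab j)))\<^sup>2
         + (\<Sum>j\<in>J. (a j)\<^sup>2 * (expectation (\<lambda>\<omega>. (X (lab j) \<omega>)\<^sup>2) - (expectation (X (lab j)))\<^sup>2))"
proof -
  define m where "m j = expectation (X (lab j))" for j
  define q where "q j = expectation (\<lambda>\<omega>. (X (lab j) \<omega>)\<^sup>2)" for j
  have P: "integrable M (\<lambda>\<omega>. X (lab j) \<omega> * X (lab k) \<omega>) \<and>
      expectation (\<lambda>\<omega>. X (lab j) \<omega> * X (lab k) \<omega>) = (if j = k then q j else m j * m k)"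
    if jk: "j \<in> J" "k \<in> J" for j k
  proof (cases "j = k")
    case True
    then show ?thesis using int2[OF jk(1)] by (simp add: q_def power2_eq_square)
  next
    case False
    then have ne: "lab j \<noteq> lab k" using inj jk by (auto dest: inj_onD)
    have ind2: "indep_vars (\<lambda>_. borel) X {lab j, lab k}"
      by (rule indep_vars_subset[OF ind]) (use sub jk in auto)
    have ii: "\<And>i. i \<in> {lab j, lab k} \<Longrightarrow> integrable M (X i)" using int1 jk by auto
    have "(\<lambda>\<omega>. X (lab j) \<omega> * X (lab k) \<omega>) = (\<lambda>\<omega>. \<Prod>i\<in>{lab j, lab k}. X i \<omega>)"
      using ne by auto
    moreover have "integrable M (\<lambda>\<omega>. \<Prod>i\<in>{lab j, lab k}. X i \<omega>)"
      by (rule indep_vars_integrable[OF _ ind2 ii]) auto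
    moreover have "expectation (\<lambda>\<omega>. \<Prod>i\<in>{lab j, lab k}. X i \<omega>) = (\<Prod>i\<in>{lab j, lab k}. expectation (X i))"
      by (rule indep_vars_lebesgue_integral[OF _ ind2 ii]) auto
    ultimately show ?thesis using ne False by (simp add: m_def)
  qed
  have sq: "(\<lambda>\<omega>. (\<Sum>j\<in>J. a j * X (lab j) \<omega>)\<^sup>2) = (\<lambda>\<omega>. \<Sum>j\<in>J. \<Sum>k\<in>J. (a j * a k) * (X (lab j) \<omega> * X (lab k) \<omega>))"
    by (auto simp: power2_eq_square sum_product algebra_simps)
  show "integrable M (\<lambda>\<omega>. (\<Sum>j\<in>J. a j * X (lab j) \<omega>)\<^sup>2)"
    unfolding sq using P by (intro Bochner_Integration.integrable_sum integrable_mult_right) auto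
  have "expectation (\<lambda>\<omega>. (\<Sum>j\<in>J. a j * X (lab j) \<omega>)\<^sup>2)
      = (\<Sum>j\<in>J. \<Sum>k\<in>J. (a j * a k) * (if j = k then q j else m j * m k))"
  proof -
    have "expectation (\<lambda>\<omega>. \<Sum>j\<in>J. \<Sum>k\<in>J. (a j * a k) * (X (lab j) \<omega> * X (lab k) \<omega>))
        = (\<Sum>j\<in>J. expectation (\<lambda>\<omega>. \<Sum>k\<in>J. (a j * a k) * (X (lab j) \<omega> * X (lab k) \<omega>)))"
      by (rule Bochner_Integration.integral_sum) (use P in \<open>auto intro!: Bochner_Integration.integrable_sum\<close>)
    also have "\<dots> = (\<Sum>j\<in>J. \<Sum>k\<in>J. expectation (\<lambda>\<omega>. (a j * a k) * (X (lab j) \<omega> * X (lab k) \<omega>)))"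
      by (intro sum.cong refl Bochner_Integration.integral_sum) (use P in auto)
    also have "\<dots> = (\<Sum>j\<in>J. \<Sum>k\<in>J. (a j * a k) * (if j = k then q j else m j * m k))"
      by (intro sum.cong refl) (use P in simp)
    finally show ?thesis unfolding sq .
  qed
  also have "\<dots> = (\<Sum>j\<in>J. \<Sum>k\<in>J. (a j * m j) * (a k * m k) + (if j = k then (a j)\<^sup>2 * (q j - (m j)\<^sup>2) else 0))"
    by (intro sum.cong refl) (auto simp: power2_eq_square algebra_simps)
  also have "\<dots> = (\<Sum>j\<in>J. a j * m j)\<^sup>2 + (\<Sum>j\<in>J. (a j)\<^sup>2 * (q j - (m j)\<^sup>2))"
    using fin by (simp add: sum.distrib power2_eq_square sum_product)
  finally show "expectation (\<lambda>\<omega>. (\<Sum>j\<in>J. a j * X (lab j) \<omega>)\<^sup>2)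
       = (\<Sum>j\<in>J. a j * expectation (X (lab j)))\<^sup>2
         + (\<Sum>j\<in>J. (a j)\<^sup>2 * (expectation (\<lambda>\<omega>. (X (lab j) \<omega>)\<^sup>2) - (expectation (X (lab j)))\<^sup>2))"
    by (simp add: m_def q_def)
qed

lemma (in prob_space) indep_groups:
  fixes X :: "'i \<Rightarrow> 'a \<Rightarrow> real" and F G :: "('i \<Rightarrow> real) \<Rightarrow> real"
  assumes ind: "indep_vars (\<lambda>_. borel) X I" and AB: "A \<inter> B = {}" "A \<subseteq> I" "B \<subseteq> I"
    and F: "F \<in> borel_measurable (PiM A (\<lambda>_. borel))" and G: "G \<in> borel_measurable (PiM B (\<lambda>_. borel))"
    and iF: "integrable M (\<lambda>\<omega>. F (restrict (\<lambda>i. X i \<omega>) A))"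
    and iG: "integrable M (\<lambda>\<omega>. G (restrict (\<lambda>i. X i \<omega>) B))"
  shows "integrable M (\<lambda>\<omega>. F (restrict (\<lambda>i. X i \<omega>) A) * G (restrict (\<lambda>i. X i \<omega>) B))"
    "expectation (\<lambda>\<omega>. F (restrict (\<lambda>i. X i \<omega>) A) * G (restrict (\<lambda>i. X i \<omega>) B))
      = expectation (\<lambda>\<omega>. F (restrict (\<lambda>i. X i \<omega>) A)) * expectation (\<lambda>\<omega>. G (restrict (\<lambda>i. X i \<omega>) B))"
proof -
  have "indep_var borel (F \<circ> (\<lambda>\<omega>. restrict (\<lambda>i. X i \<omega>) A)) borel (G \<circ> (\<lambda>\<omega>. restrict (\<lambda>i. X i \<omega>) B))"
    by (rule indep_var_compose[OF indep_var_restrict[OF ind AB] F G])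
  then have iv: "indep_var borel (\<lambda>\<omega>. F (restrict (\<lambda>i. X i \<omega>) A)) borel (\<lambda>\<omega>. G (restrict (\<lambda>i. X i \<omega>) B))"
    by (simp add: comp_def)
  show "integrable M (\<lambda>\<omega>. F (restrict (\<lambda>i. X i \<omega>) A) * G (restrict (\<lambda>i. X i \<omega>) B))"
    by (rule indep_var_integrable[OF iv iF iG])
  show "expectation (\<lambda>\<omega>. F (restrict (\<lambda>i. X i \<omega>) A) * G (restrict (\<lambda>i. X i \<omega>) B))
      = expectation (\<lambda>\<omega>. F (restrict (\<lambda>i. X i \<omega>) A)) * expectation (\<lambda>\<omega>. G (restrict (\<lambda>i. X i \<omega>) B))"
    by (rule indep_var_lebesgue_integral[OF iv iF iG])
qed



definition CSSf :: "nat \<Rightarrow> (rv_label \<Rightarrow> real) \<Rightarrow> real" where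
  "CSSf no x = (\<Sum>i=1..no. (x (Yv i))\<^sup>2) - (\<Sum>i=1..no. x (Yv i))\<^sup>2 / real no"

definition Rf :: "nat \<Rightarrow> (rv_label \<Rightarrow> real) \<Rightarrow> real" where
  "Rf d x = 1 / \<bar>x (Uv d)\<bar>"

definition Qf :: "nat \<Rightarrow> nat \<Rightarrow> nat \<Rightarrow> (rv_label \<Rightarrow> real) \<Rightarrow> real" where
  "Qf no nmi d x = (\<Sum>i=no+1..no+nmi. (x (Zimpv i d))\<^sup>2) - (\<Sum>i=no+1..no+nmi. x (Zimpv i d))\<^sup>2 / real nmi
     + (real no * real nmi / real (no + nmi)) * (x (ZPDv d) + (\<Sum>i=no+1..no+nmi. x (Zimpv i d)) / real nmi)\<^sup>2"

lemma sqrt_sq_abs: "(sqrt t)\<^sup>2 = \<bar>t\<bar>"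
proof (cases "t \<ge> 0")
  case False
  have "sqrt t = - sqrt (-t)" using real_sqrt_minus[of "-t"] by simp
  then show ?thesis using False by simp
qed simp

lemma ptw:
  assumes "no \<ge> 1" "nmi \<ge> 1"
  shows "sigma2_MI_PD no nmi D x
     = (\<Sum>d=1..D. (CSSf no x + CSSf no x * (Rf d x * Qf no nmi d x)) / (real (no + nmi) - 1)) / real D"
proof -
  define ybar where "ybar = sample_mean no (\<lambda>i. x (Yv i))"
  define CSS where "CSS = (\<Sum>i=1..no. (x (Yv i) - ybar)\<^sup>2)"
  have css: "CSS = CSSf no x"
    using sumsq_dev[of "{1..no}" "\<lambda>i. x (Yv i)"] assms
    by (simp add: CSS_def CSSf_def ybar_def sample_mean_def)
  have cnn: "CSS \<ge> 0" unfolding CSS_def by (intro sum_nonneg) auto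
  have one: "sample_var (no + nmi)
      (\<lambda>i. if i \<le> no then x (Yv i) else ybar + sqrt (CSS / x (Uv d)) * x (ZPDv d) + sqrt (CSS / x (Uv d)) * x (Zimpv i d))
      = (CSSf no x + CSSf no x * (Rf d x * Qf no nmi d x)) / (real (no + nmi) - 1)" for d
  proof -
    note A = alg[OF assms, where y="\<lambda>i. x (Yv i)" and w="\<lambda>i. x (Zimpv i d)" and z="x (ZPDv d)"
        and s="sqrt (CSS / x (Uv d))" and ybar=ybar]
    have A': "(\<Sum>i=1..no+nmi. ((if i \<le> no then x (Yv i) else ybar + sqrt (CSS / x (Uv d)) * x (ZPDv d) + sqrt (CSS / x (Uv d)) * x (Zimpv i d))
           - (\<Sum>j=1..no+nmi. (if j \<le> no then x (Yv j) else ybar + sqrt (CSS / x (Uv d)) * x (ZPDv d) + sqrt (CSS / x (Uv d)) * x (Zimpv j d))) / real (no + nmi))\<^sup>2)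
        = CSSf no x + (sqrt (CSS / x (Uv d)))\<^sup>2 * Qf no nmi d x"
      by (rule A[THEN trans]) (simp_all add: ybar_def sample_mean_def CSSf_def Qf_def)
    have s2: "(sqrt (CSS / x (Uv d)))\<^sup>2 = CSSf no x * Rf d x"
      using cnn by (simp add: sqrt_sq_abs css[symmetric] Rf_def abs_div)
    show ?thesis unfolding sample_var_def sample_mean_def A' s2 by (simp add: algebra_simps)
  qed
  show ?thesis
    unfolding sigma2_MI_PD_def Let_def
    by (intro arg_cong[where f="\<lambda>t. t / real D"] sum.cong refl)
       (simp only: one[symmetric] ybar_def[symmetric] CSS_def[symmetric])
qed

lemma pm: "l \<in> A \<Longrightarrow> (\<lambda>x. x l) \<in> borel_measurable (PiM A (\<lambda>_. borel :: real measure))"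
  by (rule measurable_component_singleton)

lemma CSSf_restrict: "Yv ` {1..no} \<subseteq> A \<Longrightarrow> CSSf no (restrict x A) = CSSf no x"
proof -
  assume a: "Yv ` {1..no} \<subseteq> A"
  have h: "\<And>i. i \<in> {1..no} \<Longrightarrow> restrict x A (Yv i) = x (Yv i)" using a by (auto simp: image_subset_iff)
  have e1: "(\<Sum>i=1..no. (restrict x A (Yv i))\<^sup>2) = (\<Sum>i=1..no. (x (Yv i))\<^sup>2)"
    by (rule sum.cong) (use h in auto)
  have e2: "(\<Sum>i=1..no. restrict x A (Yv i)) = (\<Sum>i=1..no. x (Yv i))"
    by (rule sum.cong) (use h in auto)
  show ?thesis unfolding CSSf_def e1 e2 ..
qed

lemma Rf_restrict: "Uv d \<in> A \<Longrightarrow> Rf d (restrict x A) = Rf d x"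
  by (simp add: Rf_def)

lemma Qf_restrict: "insert (ZPDv d) ((\<lambda>i. Zimpv i d) ` {no+1..no+nmi}) \<subseteq> A \<Longrightarrow> Qf no nmi d (restrict x A) = Qf no nmi d x"
proof -
  assume a: "insert (ZPDv d) ((\<lambda>i. Zimpv i d) ` {no+1..no+nmi}) \<subseteq> A"
  have h: "\<And>i. i \<in> {no+1..no+nmi} \<Longrightarrow> restrict x A (Zimpv i d) = x (Zimpv i d)" using a by (auto simp: image_subset_iff)
  have h2: "restrict x A (ZPDv d) = x (ZPDv d)" using a by (auto simp: image_subset_iff)
  have e1: "(\<Sum>i=no+1..no+nmi. (restrict x A (Zimpv i d))\<^sup>2) = (\<Sum>i=no+1..no+nmi. (x (Zimpv i d))\<^sup>2)"
    by (rule sum.cong) (use h in auto)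
  have e2: "(\<Sum>i=no+1..no+nmi. restrict x A (Zimpv i d)) = (\<Sum>i=no+1..no+nmi. x (Zimpv i d))"
    by (rule sum.cong) (use h in auto)
  show ?thesis unfolding Qf_def e1 e2 h2 ..
qed

lemma CSSf_meas: "Yv ` {1..no} \<subseteq> A \<Longrightarrow> CSSf no \<in> borel_measurable (PiM A (\<lambda>_. borel))"
  unfolding CSSf_def
  by (intro borel_measurable_diff borel_measurable_sum borel_measurable_divide borel_measurable_power
      borel_measurable_const pm) auto

lemma Rf_meas: "Uv d \<in> A \<Longrightarrow> Rf d \<in> borel_measurable (PiM A (\<lambda>_. borel))"
  unfolding Rf_def
  by (intro borel_measurable_divide borel_measurable_abs borel_measurable_const pm)

lemma Qf_meas: "insert (ZPDv d) ((\<lambda>i. Zimpv i d) ` {no+1..no+nmi}) \<subseteq> A \<Longrightarrow> Qf no nmi d \<in> borel_measurable (PiM A (\<lambda>_. borel))"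
  unfolding Qf_def
  by (intro borel_measurable_add borel_measurable_times borel_measurable_diff borel_measurable_sum borel_measurable_divide borel_measurable_power
      borel_measurable_const pm) auto



theorem mainTheorem2:
  fixes M :: "'a measure" and X :: "rv_label \<Rightarrow> 'a \<Rightarrow> real"
    and n_obs n_mis D :: nat and \<mu> \<sigma> \<nu>_prior :: real
  assumes "prob_space M"
    and "n_obs \<ge> 2" and "n_mis \<ge> 1" and "D \<ge> 1"
    and "\<sigma> > 0"
    and "real n_obs + \<nu>_prior > 3"
    and "prob_space.indep_vars M (\<lambda>_. borel) X
           ({Yv i | i. i \<in> {1..n_obs}} \<union> {Uv d | d. d \<in> {1..D}} \<union> {ZPDv d | d. d \<in> {1..D}}
            \<union> {Zimpv i d | i d. i \<in> {n_obs+1..n_obs+n_mis} \<and> d \<in> {1..D}})"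
    and "\<And>i. i \<in> {1..n_obs} \<Longrightarrow>
           distributed M lborel (X (Yv i)) (\<lambda>y. ennreal (normal_density \<mu> \<sigma> y))"
    and "\<And>d. d \<in> {1..D} \<Longrightarrow>
           distributed M lborel (X (Uv d))
             (\<lambda>u. ennreal (chi_squared_density (\<nu>_prior + real n_obs - 1) u))"
    and "\<And>d. d \<in> {1..D} \<Longrightarrow>
           distributed M lborel (X (ZPDv d)) (\<lambda>z. ennreal (normal_density 0 (1 / sqrt (real n_obs)) z))"
    and "\<And>i d. i \<in> {n_obs+1..n_obs+n_mis} \<Longrightarrow> d \<in> {1..D} \<Longrightarrow>
           distributed M lborel (X (Zimpv i d)) (\<lambda>z. ennreal (normal_density 0 1 z))"
  shows "(\<integral>\<omega>. sigma2_MI_PD n_obs n_mis D (\<lambda>l. X l \<omega>) \<partial>M) - \<sigma>\<^sup>2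
         = - \<sigma>\<^sup>2 * (real n_mis * (\<nu>_prior - 2))
             / ((real (n_obs + n_mis) - 1) * (real n_obs + \<nu>_prior - 3))"
proof -
  interpret P: prob_space M by (rule assms(1))
  note ind = assms(7)
  have no1: "n_obs \<ge> 1" and nm1: "n_mis \<ge> 1" using assms(2,3) by auto
  define k where "k = \<nu>_prior + real n_obs - 1"
  have k2: "k > 2" using assms(6) by (simp add: k_def)
  define J0 where "J0 = {n_obs+1..n_obs+n_mis}"
  have J0: "finite J0" "card J0 = n_mis" "0 \<notin> J0" by (auto simp: J0_def)
  have Ymom: "integrable M (X (Yv i)) \<and> P.expectation (X (Yv i)) = \<mu> \<and>
      integrable M (\<lambda>\<omega>. (X (Yv i) \<omega>)\<^sup>2) \<and> P.expectation (\<lambda>\<omega>. (X (Yv i) \<omega>)\<^sup>2) = \<mu>\<^sup>2 + \<sigma>\<^sup>2"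
    if "i \<in> {1..n_obs}" for i
    using P.normal_mom[OF assms(5) assms(8)[OF that]] by auto
  have Zmom: "integrable M (X (ZPDv d)) \<and> P.expectation (X (ZPDv d)) = 0 \<and>
      integrable M (\<lambda>\<omega>. (X (ZPDv d) \<omega>)\<^sup>2) \<and> P.expectation (\<lambda>\<omega>. (X (ZPDv d) \<omega>)\<^sup>2) = 1 / real n_obs"
    if "d \<in> {1..D}" for d
  proof -
    have s: "1 / sqrt (real n_obs) > 0" using no1 by simp
    have "(1 / sqrt (real n_obs))\<^sup>2 = 1 / real n_obs" by (simp add: power_divide)
    then show ?thesis using P.normal_mom[OF s assms(10)[OF that]] by auto
  qed
  have Wmom: "integrable M (X (Zimpv i d)) \<and> P.expectation (X (Zimpv i d)) = 0 \<and>
      integrable M (\<lambda>\<omega>. (X (Zimpv i d) \<omega>)\<^sup>2) \<and> P.expectation (\<lambda>\<omega>. (X (Zimpv i d) \<omega>)\<^sup>2) = 1"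
    if "i \<in> J0" "d \<in> {1..D}" for i d
    using P.normal_mom[of 1 "X (Zimpv i d)" 0] assms(11)[of i d] that by (auto simp: J0_def)
  define C where "C = (\<lambda>\<omega>. CSSf n_obs (\<lambda>l. X l \<omega>))"
  have C_eq: "C = (\<lambda>\<omega>. (\<Sum>i=1..n_obs. (X (Yv i) \<omega>)\<^sup>2) - (\<Sum>i\<in>{1..n_obs}. (\<lambda>_. 1) i * X (Yv i) \<omega>)\<^sup>2 / real n_obs)"
    by (simp add: C_def CSSf_def fun_eq_iff)
  have qY: "integrable M (\<lambda>\<omega>. (\<Sum>i\<in>{1..n_obs}. (\<lambda>_. 1) i * X (Yv i) \<omega>)\<^sup>2)"
    "P.expectation (\<lambda>\<omega>. (\<Sum>i\<in>{1..n_obs}. (\<lambda>_. 1) i * X (Yv i) \<omega>)\<^sup>2)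
       = (\<Sum>j\<in>{1..n_obs}. (\<lambda>_. 1) j * P.expectation (X (Yv j)))\<^sup>2
         + (\<Sum>j\<in>{1..n_obs}. ((\<lambda>_. 1) j)\<^sup>2 * (P.expectation (\<lambda>\<omega>. (X (Yv j) \<omega>)\<^sup>2) - (P.expectation (X (Yv j)))\<^sup>2))"
    by (rule P.quad_form[OF ind]; use Ymom in \<open>auto simp: inj_on_def\<close>)+
  have qY1: "(\<Sum>j\<in>{1..n_obs}. (\<lambda>_. 1) j * P.expectation (X (Yv j))) = real n_obs * \<mu>"
  proof -
    have "(\<Sum>j\<in>{1..n_obs}. (\<lambda>_. 1) j * P.expectation (X (Yv j))) = (\<Sum>j\<in>{1..n_obs}. \<mu>)"
      by (rule sum.cong) (use Ymom in auto)
    then show ?thesis by simp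
  qed
  have qY2: "(\<Sum>j\<in>{1..n_obs}. ((\<lambda>_. 1) j)\<^sup>2 * (P.expectation (\<lambda>\<omega>. (X (Yv j) \<omega>)\<^sup>2) - (P.expectation (X (Yv j)))\<^sup>2))
      = real n_obs * \<sigma>\<^sup>2"
  proof -
    have "(\<Sum>j\<in>{1..n_obs}. ((\<lambda>_. 1) j)\<^sup>2 * (P.expectation (\<lambda>\<omega>. (X (Yv j) \<omega>)\<^sup>2) - (P.expectation (X (Yv j)))\<^sup>2))
        = (\<Sum>j\<in>{1..n_obs}. \<sigma>\<^sup>2)"
      by (rule sum.cong) (use Ymom in auto)
    then show ?thesis by simp
  qed
  have S2int: "integrable M (\<lambda>\<omega>. \<Sum>i=1..n_obs. (X (Yv i) \<omega>)\<^sup>2)"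
    by (rule Bochner_Integration.integrable_sum) (use Ymom in auto)
  have S2E: "P.expectation (\<lambda>\<omega>. \<Sum>i=1..n_obs. (X (Yv i) \<omega>)\<^sup>2) = real n_obs * (\<mu>\<^sup>2 + \<sigma>\<^sup>2)"
  proof -
    have "P.expectation (\<lambda>\<omega>. \<Sum>i=1..n_obs. (X (Yv i) \<omega>)\<^sup>2) = (\<Sum>i=1..n_obs. P.expectation (\<lambda>\<omega>. (X (Yv i) \<omega>)\<^sup>2))"
      by (rule Bochner_Integration.integral_sum) (use Ymom in auto)
    also have "\<dots> = (\<Sum>i=1..n_obs. \<mu>\<^sup>2 + \<sigma>\<^sup>2)"
      by (rule sum.cong) (use Ymom in auto)
    finally show ?thesis by simp
  qed
  have Cint: "integrable M C" unfolding C_eq using S2int qY(1) by auto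
  have CE: "P.expectation C = (real n_obs - 1) * \<sigma>\<^sup>2"
  proof -
    have "P.expectation C = real n_obs * (\<mu>\<^sup>2 + \<sigma>\<^sup>2) - ((real n_obs * \<mu>)\<^sup>2 + real n_obs * \<sigma>\<^sup>2) / real n_obs"
      unfolding C_eq using S2int qY S2E qY1 qY2 by simp
    also have "\<dots> = (real n_obs - 1) * \<sigma>\<^sup>2" using no1 by (simp add: field_simps power2_eq_square)
    finally show ?thesis .
  qed
  define c where "c = ((real n_obs - 1) * \<sigma>\<^sup>2 + (real n_obs - 1) * \<sigma>\<^sup>2 * (1 / (k - 2) * real n_mis)) / (real (n_obs + n_mis) - 1)"
  define T where "T d \<omega> = (C \<omega> + C \<omega> * (Rf d (\<lambda>l. X l \<omega>) * Qf n_obs n_mis d (\<lambda>l. X l \<omega>))) / (real (n_obs + n_mis) - 1)" for d \<omega>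
  have Td: "integrable M (T d) \<and> P.expectation (T d) = c" if d: "d \<in> {1..D}" for d
  proof -
    define R where "R = (\<lambda>\<omega>. Rf d (\<lambda>l. X l \<omega>))"
    define Q where "Q = (\<lambda>\<omega>. Qf n_obs n_mis d (\<lambda>l. X l \<omega>))"
    have Rx: "integrable M R" "P.expectation R = 1 / (k - 2)"
      using P.chi_inv_expect[OF k2, of "X (Uv d)"] assms(9)[OF d] by (auto simp: R_def Rf_def k_def)
    define lab where "lab = (\<lambda>j::nat. if j = 0 then ZPDv d else Zimpv j d)"
    define a where "a = (\<lambda>j::nat. if j = 0 then 1 else 1 / real n_mis)"
    have labm: "integrable M (X (lab j)) \<and> integrable M (\<lambda>\<omega>. (X (lab j) \<omega>)\<^sup>2)" if "j \<in> insert 0 J0" for j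
      using that Zmom[OF d] Wmom[OF _ d] by (cases "j = 0") (auto simp: lab_def)
    have labsub: "lab ` insert 0 J0 \<subseteq> {Yv i | i. i \<in> {1..n_obs}} \<union> {Uv d | d. d \<in> {1..D}} \<union> {ZPDv d | d. d \<in> {1..D}}
            \<union> {Zimpv i d | i d. i \<in> {n_obs+1..n_obs+n_mis} \<and> d \<in> {1..D}}"
      using d by (auto simp: lab_def J0_def)
    have labinj: "inj_on lab (insert 0 J0)" using J0 by (auto simp: inj_on_def lab_def)
    have qZ: "integrable M (\<lambda>\<omega>. (\<Sum>j\<in>insert 0 J0. a j * X (lab j) \<omega>)\<^sup>2)"
      "P.expectation (\<lambda>\<omega>. (\<Sum>j\<in>insert 0 J0. a j * X (lab j) \<omega>)\<^sup>2)
       = (\<Sum>j\<in>insert 0 J0. a j * P.expectation (X (lab j)))\<^sup>2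
         + (\<Sum>j\<in>insert 0 J0. (a j)\<^sup>2 * (P.expectation (\<lambda>\<omega>. (X (lab j) \<omega>)\<^sup>2) - (P.expectation (X (lab j)))\<^sup>2))"
      by (rule P.quad_form[OF ind]; use J0 labsub labinj labm in auto)+
    have qZ1: "(\<Sum>j\<in>insert 0 J0. a j * P.expectation (X (lab j))) = 0"
      by (rule sum.neutral) (use Zmom[OF d] Wmom[OF _ d] in \<open>auto simp: lab_def\<close>)
    have qZ2: "(\<Sum>j\<in>insert 0 J0. (a j)\<^sup>2 * (P.expectation (\<lambda>\<omega>. (X (lab j) \<omega>)\<^sup>2) - (P.expectation (X (lab j)))\<^sup>2))
        = 1 / real n_obs + real n_mis * (1 / real n_mis)\<^sup>2"
    proof -
      have "(\<Sum>j\<in>J0. (a j)\<^sup>2 * (P.expectation (\<lambda>\<omega>. (X (lab j) \<omega>)\<^sup>2) - (P.expectation (X (lab j)))\<^sup>2))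
          = (\<Sum>j\<in>J0. (1 / real n_mis)\<^sup>2)"
        by (rule sum.cong) (use Wmom[OF _ d] J0 in \<open>auto simp: lab_def a_def\<close>)
      then show ?thesis using J0 Zmom[OF d] by (simp add: lab_def a_def)
    qed
    have zsum: "(\<Sum>j\<in>insert 0 J0. a j * X (lab j) \<omega>) = X (ZPDv d) \<omega> + (\<Sum>i=n_obs+1..n_obs+n_mis. X (Zimpv i d) \<omega>) / real n_mis" for \<omega>
    proof -
      have "(\<Sum>j\<in>J0. a j * X (lab j) \<omega>) = (\<Sum>j\<in>J0. X (Zimpv j d) \<omega> / real n_mis)"
        by (rule sum.cong) (use J0 in \<open>auto simp: lab_def a_def\<close>)
      then show ?thesis using J0 by (simp add: lab_def a_def sum_divide_distrib J0_def)
    qed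
    have qW: "integrable M (\<lambda>\<omega>. (\<Sum>i\<in>J0. (\<lambda>_. 1) i * X ((\<lambda>i. Zimpv i d) i) \<omega>)\<^sup>2)"
      "P.expectation (\<lambda>\<omega>. (\<Sum>i\<in>J0. (\<lambda>_. 1) i * X ((\<lambda>i. Zimpv i d) i) \<omega>)\<^sup>2)
       = (\<Sum>j\<in>J0. (\<lambda>_. 1) j * P.expectation (X ((\<lambda>i. Zimpv i d) j)))\<^sup>2
         + (\<Sum>j\<in>J0. ((\<lambda>_. 1) j)\<^sup>2 * (P.expectation (\<lambda>\<omega>. (X ((\<lambda>i. Zimpv i d) j) \<omega>)\<^sup>2) - (P.expectation (X ((\<lambda>i. Zimpv i d) j)))\<^sup>2))"
      by (rule P.quad_form[OF ind]; use J0 d Wmom[OF _ d] in \<open>auto simp: inj_on_def J0_def\<close>)+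
    have qW1: "(\<Sum>j\<in>J0. (\<lambda>_. 1) j * P.expectation (X ((\<lambda>i. Zimpv i d) j))) = 0"
      by (rule sum.neutral) (use Wmom[OF _ d] in auto)
    have qW2: "(\<Sum>j\<in>J0. ((\<lambda>_. 1) j)\<^sup>2 * (P.expectation (\<lambda>\<omega>. (X ((\<lambda>i. Zimpv i d) j) \<omega>)\<^sup>2) - (P.expectation (X ((\<lambda>i. Zimpv i d) j)))\<^sup>2))
        = real n_mis"
    proof -
      have "(\<Sum>j\<in>J0. ((\<lambda>_. 1) j)\<^sup>2 * (P.expectation (\<lambda>\<omega>. (X ((\<lambda>i. Zimpv i d) j) \<omega>)\<^sup>2) - (P.expectation (X ((\<lambda>i. Zimpv i d) j)))\<^sup>2))
          = (\<Sum>j\<in>J0. 1)"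
        by (rule sum.cong) (use Wmom[OF _ d] in auto)
      then show ?thesis using J0 by simp
    qed
    have W2int: "integrable M (\<lambda>\<omega>. \<Sum>i\<in>J0. (X (Zimpv i d) \<omega>)\<^sup>2)"
      by (rule Bochner_Integration.integrable_sum) (use Wmom[OF _ d] in auto)
    have W2E: "P.expectation (\<lambda>\<omega>. \<Sum>i\<in>J0. (X (Zimpv i d) \<omega>)\<^sup>2) = real n_mis"
    proof -
      have "P.expectation (\<lambda>\<omega>. \<Sum>i\<in>J0. (X (Zimpv i d) \<omega>)\<^sup>2) = (\<Sum>i\<in>J0. P.expectation (\<lambda>\<omega>. (X (Zimpv i d) \<omega>)\<^sup>2))"
        by (rule Bochner_Integration.integral_sum) (use Wmom[OF _ d] in auto)
      also have "\<dots> = (\<Sum>i\<in>J0. 1)"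
        by (rule sum.cong) (use Wmom[OF _ d] in auto)
      finally show ?thesis using J0 by simp
    qed
    have Q_eq: "Q = (\<lambda>\<omega>. (\<Sum>i\<in>J0. (X (Zimpv i d) \<omega>)\<^sup>2) - (\<Sum>i\<in>J0. (\<lambda>_. 1) i * X ((\<lambda>i. Zimpv i d) i) \<omega>)\<^sup>2 / real n_mis
        + (real n_obs * real n_mis / real (n_obs + n_mis)) * (\<Sum>j\<in>insert 0 J0. a j * X (lab j) \<omega>)\<^sup>2)"
      unfolding zsum by (simp add: Q_def Qf_def J0_def fun_eq_iff)
    have Qint: "integrable M Q" unfolding Q_eq using W2int qW(1) qZ(1) by auto
    have QE: "P.expectation Q = real n_mis"
    proof -
      have "P.expectation Q = real n_mis - real n_mis / real n_mis
          + (real n_obs * real n_mis / real (n_obs + n_mis)) * (1 / real n_obs + real n_mis * (1 / real n_mis)\<^sup>2)"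
        unfolding Q_eq using W2int qW qZ W2E qW1 qW2 qZ1 qZ2 by simp
      also have "\<dots> = real n_mis"
      proof -
        have p: "real n_obs \<noteq> 0" "real n_mis \<noteq> 0" "real (n_obs + n_mis) \<noteq> 0" using no1 nm1 by auto
        have h1: "real n_mis * (1 / real n_mis)\<^sup>2 = 1 / real n_mis" using p by (simp add: power2_eq_square)
        have h2: "1 / real n_obs + 1 / real n_mis = real (n_obs + n_mis) / (real n_obs * real n_mis)"
          using p by (simp add: field_simps)
        have h3: "real n_obs * real n_mis / real (n_obs + n_mis) * (real (n_obs + n_mis) / (real n_obs * real n_mis)) = 1"
          using p by simp
        show ?thesis unfolding h1 h2 h3 using p by simp
      qed
      finally show ?thesis .
    qed
    define IS where "IS = {Yv i | i. i \<in> {1..n_obs}} \<union> {Uv d | d. d \<in> {1..D}} \<union> {ZPDv d | d. d \<in> {1..D}}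
            \<union> {Zimpv i d | i d. i \<in> {n_obs+1..n_obs+n_mis} \<and> d \<in> {1..D}}"
    define A where "A = Yv ` {1..n_obs}"
    define B2 where "B2 = insert (ZPDv d) ((\<lambda>i. Zimpv i d) ` {n_obs+1..n_obs+n_mis})"
    define B where "B = insert (Uv d) B2"
    have ind': "P.indep_vars (\<lambda>_. borel) X IS" using ind by (simp add: IS_def)
    have AB: "A \<inter> B = {}" "A \<subseteq> IS" "B \<subseteq> IS" using d by (auto simp: A_def B_def B2_def IS_def)
    have AB2: "{Uv d} \<inter> B2 = {}" "{Uv d} \<subseteq> IS" "B2 \<subseteq> IS" using d by (auto simp: B2_def IS_def)
    have rC: "CSSf n_obs (restrict (\<lambda>i. X i \<omega>) A) = C \<omega>" for \<omega>
      by (simp add: C_def CSSf_restrict A_def)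
    have rR: "Rf d (restrict (\<lambda>i. X i \<omega>) {Uv d}) = R \<omega>" for \<omega>
      by (simp add: R_def Rf_restrict)
    have rQ: "Qf n_obs n_mis d (restrict (\<lambda>i. X i \<omega>) B2) = Q \<omega>" for \<omega>
      by (simp add: Q_def Qf_restrict B2_def)
    have rRQ: "(\<lambda>x. Rf d x * Qf n_obs n_mis d x) (restrict (\<lambda>i. X i \<omega>) B) = R \<omega> * Q \<omega>" for \<omega>
    proof -
      have q: "Qf n_obs n_mis d (restrict x B) = Qf n_obs n_mis d x" for x
        by (rule Qf_restrict) (auto simp: B_def B2_def)
      have r: "Rf d (restrict x B) = Rf d x" for x
        by (rule Rf_restrict) (auto simp: B_def)
      show ?thesis by (simp only: q r R_def Q_def)
    qed
    have mC: "CSSf n_obs \<in> borel_measurable (PiM A (\<lambda>_. borel))" by (rule CSSf_meas) (simp add: A_def)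
    have mR: "Rf d \<in> borel_measurable (PiM {Uv d} (\<lambda>_. borel))" by (rule Rf_meas) simp
    have mQ: "Qf n_obs n_mis d \<in> borel_measurable (PiM B2 (\<lambda>_. borel))" by (rule Qf_meas) (simp add: B2_def)
    have mRQ: "(\<lambda>x. Rf d x * Qf n_obs n_mis d x) \<in> borel_measurable (PiM B (\<lambda>_. borel))"
      by (intro borel_measurable_times Rf_meas Qf_meas) (auto simp: B_def B2_def)
    have iR: "integrable M (\<lambda>\<omega>. Rf d (restrict (\<lambda>i. X i \<omega>) {Uv d}))" unfolding rR by (rule Rx(1))
    have iQ: "integrable M (\<lambda>\<omega>. Qf n_obs n_mis d (restrict (\<lambda>i. X i \<omega>) B2))" unfolding rQ by (rule Qint)
    note G1 = P.indep_groups[OF ind' AB2 mR mQ iR iQ, unfolded rR rQ]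
    have iC: "integrable M (\<lambda>\<omega>. CSSf n_obs (restrict (\<lambda>i. X i \<omega>) A))" unfolding rC by (rule Cint)
    have iRQ: "integrable M (\<lambda>\<omega>. (\<lambda>x. Rf d x * Qf n_obs n_mis d x) (restrict (\<lambda>i. X i \<omega>) B))"
      unfolding rRQ by (rule G1(1))
    note G2 = P.indep_groups[OF ind' AB mC mRQ iC iRQ, unfolded rC rRQ]
    have T_eq: "T d = (\<lambda>\<omega>. (C \<omega> + C \<omega> * (R \<omega> * Q \<omega>)) / (real (n_obs + n_mis) - 1))"
      by (simp add: T_def R_def Q_def fun_eq_iff)
    show ?thesis unfolding T_eq using Cint G2 G1 Rx QE CE
      by (simp add: c_def)
  qed
  have ptw': "(\<lambda>\<omega>. sigma2_MI_PD n_obs n_mis D (\<lambda>l. X l \<omega>)) = (\<lambda>\<omega>. (\<Sum>d=1..D. T d \<omega>) / real D)"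
    by (simp add: ptw[OF no1 nm1] T_def C_def fun_eq_iff)
  have "P.expectation (\<lambda>\<omega>. sigma2_MI_PD n_obs n_mis D (\<lambda>l. X l \<omega>)) = (\<Sum>d=1..D. P.expectation (T d)) / real D"
    unfolding ptw' by (subst Bochner_Integration.integral_sum[symmetric]) (use Td in auto)
  also have "\<dots> = (\<Sum>d=1..D. c) / real D"
    by (intro arg_cong[where f="\<lambda>t. t / real D"] sum.cong) (use Td in auto)
  also have "\<dots> = c" using assms(4) by simp
  finally have E: "P.expectation (\<lambda>\<omega>. sigma2_MI_PD n_obs n_mis D (\<lambda>l. X l \<omega>)) = c" .
  have d1: "real (n_obs + n_mis) - 1 \<noteq> 0" using no1 nm1 by simp
  have d2: "real n_obs + \<nu>_prior - 3 \<noteq> 0" using assms(6) by simp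
  have d3: "k - 2 = real n_obs + \<nu>_prior - 3" by (simp add: k_def)
  define aa where "aa = real (n_obs + n_mis) - 1"
  define bb where "bb = real n_obs + \<nu>_prior - 3"
  have ha: "aa * inverse aa = 1" using d1 by (simp add: aa_def)
  have hb: "bb * inverse bb = 1" using d2 by (simp add: bb_def)
  have ha': "aa = real n_obs + real n_mis - 1" by (simp add: aa_def)
  have hb': "\<nu>_prior = bb - real n_obs + 3" by (simp add: bb_def)
  show ?thesis unfolding E c_def d3 aa_def[symmetric] bb_def[symmetric] divide_inverse inverse_mult_distrib
    using ha hb hb' ha' by algebra
qed


end
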